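(* Let $n$ be an odd positive integer and let $A,B,C,D\in\{\pm1\}^{n\times n}$ be circulant good matrices of order $n$ with defining rows $(a_0,\dotsc,a_{n-1})$, $(b_0,\dotsc,b_{n-1})$, $(c_0,\dotsc,c_{n-1})$, $(d_0,\dotsc,d_{n-1})$ respectively. Then for all $1\leq k<n$, \[ a_k b_k c_k d_k = -a_{2k \bmod n}\, b_0 c_0 d_0 . \]
   Context: For a square matrix $X=(x_{i,j})_{0\le i,j<n}$: $X$ is symmetric if $x_{i,j}=x_{j,i}$ for all $i,j$; $X$ is skew if its diagonal entries are $1$ and $x_{i,j}=-x_{j,i}$ for $i\neq j$; $X$ is circulant if $x_{i,j}=x_{i-1,j-1}$ for all $i,j$ (indices mod $n$). Four matrices $A,B,C,D\in\{\pm1\}^{n\times n}$ are called (circulant) good matrices of order $n$ if they are all circulant, $A$ is skew, $B,C,D$ are symmetric, and $AA^T+B^2+C^2+D^2=4nI_n$. The defining row of a circulant matrix is its first row. *)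

theory Defs
  imports Main
begin

text \<open>An n x n integer matrix is represented as a function nat => nat => int;
only entries with indices < n are relevant (rows/columns indexed 0..n-1).\<close>

definition pm1_mat :: "nat \<Rightarrow> (nat \<Rightarrow> nat \<Rightarrow> int) \<Rightarrow> bool" where
  "pm1_mat n X \<longleftrightarrow> (\<forall>i<n. \<forall>j<n. X i j = 1 \<or> X i j = -1)"

definition symmetric_mat :: "nat \<Rightarrow> (nat \<Rightarrow> nat \<Rightarrow> int) \<Rightarrow> bool" where
  "symmetric_mat n X \<longleftrightarrow> (\<forall>i<n. \<forall>j<n. X i j = X j i)"

definition skew_mat :: "nat \<Rightarrow> (nat \<Rightarrow> nat \<Rightarrow> int) \<Rightarrow> bool" where
  "skew_mat n X \<longleftrightarrow> (\<forall>i<n. X i i = 1) \<and> (\<forall>i<n. \<forall>j<n. i \<noteq> j \<longrightarrow> X i j = - X j i)"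

definition circulant_mat :: "nat \<Rightarrow> (nat \<Rightarrow> nat \<Rightarrow> int) \<Rightarrow> bool" where
  "circulant_mat n X \<longleftrightarrow>
     (\<forall>i<n. \<forall>j<n. X i j = X ((i + n - 1) mod n) ((j + n - 1) mod n))"

definition good_matrices ::
  "nat \<Rightarrow> (nat \<Rightarrow> nat \<Rightarrow> int) \<Rightarrow> (nat \<Rightarrow> nat \<Rightarrow> int) \<Rightarrow> (nat \<Rightarrow> nat \<Rightarrow> int)
       \<Rightarrow> (nat \<Rightarrow> nat \<Rightarrow> int) \<Rightarrow> bool" where
  "good_matrices n A B C D \<longleftrightarrow>
     pm1_mat n A \<and> pm1_mat n B \<and> pm1_mat n C \<and> pm1_mat n D \<and>
     circulant_mat n A \<and> circulant_mat n B \<and> circulant_mat n C \<and> circulant_mat n D \<and>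
     skew_mat n A \<and> symmetric_mat n B \<and> symmetric_mat n C \<and> symmetric_mat n D \<and>
     (\<forall>i<n. \<forall>j<n.
        (\<Sum>k<n. A i k * A j k) + (\<Sum>k<n. B i k * B k j) + (\<Sum>k<n. C i k * C k j)
        + (\<Sum>k<n. D i k * D k j) = (if i = j then 4 * int n else 0))"

end

theory Submission
  imports Defs
begin


lemma bij_mod_shift:
  fixes N a h :: int
  assumes "N > 0"
  shows "bij_betw (\<lambda>t. (t + h) mod N) {a..<a+N} {0..<N}"
proof (rule bij_betw_imageI)
  show "inj_on (\<lambda>t. (t + h) mod N) {a..<a+N}"
  proof (rule inj_onI)
    fix x y assume x: "x \<in> {a..<a+N}" and y: "y \<in> {a..<a+N}" and e: "(x + h) mod N = (y + h) mod N"
    then have "N dvd (x + h) - (y + h)" by (simp add: mod_eq_dvd_iff)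
    then obtain q where q: "x - y = N * q" by (auto simp: dvd_def)
    have "\<bar>x - y\<bar> < N" using x y by auto
    have "q = 0"
    proof (rule ccontr)
      assume "q \<noteq> 0"
      then have "1 \<le> \<bar>q\<bar>" by simp
      then have "N * 1 \<le> N * \<bar>q\<bar>" using assms by (intro mult_left_mono) auto
      also have "\<dots> = \<bar>x - y\<bar>" using q assms by (simp add: abs_mult)
      finally show False using \<open>\<bar>x - y\<bar> < N\<close> by simp
    qed
    then show "x = y" using q by simp
  qed
  show "(\<lambda>t. (t + h) mod N) ` {a..<a+N} = {0..<N}"
  proof
    show "(\<lambda>t. (t + h) mod N) ` {a..<a+N} \<subseteq> {0..<N}" using assms by (auto intro: pos_mod_bound pos_mod_sign)
    show "{0..<N} \<subseteq> (\<lambda>t. (t + h) mod N) ` {a..<a+N}"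
    proof
      fix r assume r: "r \<in> {0..<N}"
      let ?t = "a + ((r - h - a) mod N)"
      have "?t \<in> {a..<a+N}" using assms pos_mod_bound[of N "r - h - a"] pos_mod_sign[of N "r - h - a"] by simp
      moreover have "(?t + h) mod N = r"
      proof -
        have e: "?t + h = (r - h - a) mod N + (a + h)" by simp
        have "(?t + h) mod N = ((r - h - a) + (a + h)) mod N"
          unfolding e by (rule mod_add_left_eq)
        also have "\<dots> = r mod N" by simp
        finally show ?thesis using r by simp
      qed
      ultimately show "r \<in> (\<lambda>t. (t + h) mod N) ` {a..<a+N}" by (metis image_eqI)
    qed
  qed
qed

lemma sum_periodic:
  fixes N a h :: int and f :: "int \<Rightarrow> int"
  assumes "N > 0" and per: "\<And>t. f t = f (t mod N)"
  shows "(\<Sum>t\<in>{a..<a+N}. f (t + h)) = (\<Sum>t\<in>{0..<N}. f t)"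
proof -
  have "(\<Sum>t\<in>{a..<a+N}. f (t + h)) = (\<Sum>t\<in>{a..<a+N}. f ((t + h) mod N))"
    by (intro sum.cong prod.cong refl per)
  also have "\<dots> = (\<Sum>t\<in>{0..<N}. f t)"
    using sum.reindex_bij_betw[OF bij_mod_shift[OF assms(1)]] by blast
  finally show ?thesis .
qed

lemma prod_periodic:
  fixes N a h :: int and f :: "int \<Rightarrow> int"
  assumes "N > 0" and per: "\<And>t. f t = f (t mod N)"
  shows "(\<Prod>t\<in>{a..<a+N}. f (t + h)) = (\<Prod>t\<in>{0..<N}. f t)"
proof -
  have "(\<Prod>t\<in>{a..<a+N}. f (t + h)) = (\<Prod>t\<in>{a..<a+N}. f ((t + h) mod N))"
    by (intro sum.cong prod.cong refl per)
  also have "\<dots> = (\<Prod>t\<in>{0..<N}. f t)"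
    using prod.reindex_bij_betw[OF bij_mod_shift[OF assms(1)]] by blast
  finally show ?thesis .
qed

lemma split_sym_sum:
  fixes M :: int and f :: "int \<Rightarrow> int"
  assumes "M \<ge> 0"
  shows "(\<Sum>t\<in>{-M..M}. f t) = f 0 + (\<Sum>t\<in>{1..M}. f t + f (-t))"
proof -
  have U: "{-M..M} = {-M..-1} \<union> ({0} \<union> {1..M})" using assms by auto
  have "(\<Sum>t\<in>{-M..-1}. f t) = (\<Sum>t\<in>{1..M}. f (-t))"
  proof -
    have "{-M..-1} = uminus ` {1..M}" by (auto simp: image_iff intro: bexI[where x="- _"])
    then have "sum f {-M..-1} = sum f (uminus ` {1..M})" by simp
    also have "\<dots> = sum (f \<circ> uminus) {1..M}" by (rule sum.reindex) (auto simp: inj_on_def)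
    finally show ?thesis by simp
  qed
  then show ?thesis unfolding U
    by (subst sum.union_disjoint; auto simp: sum.distrib)
qed

lemma split_sym_prod:
  fixes M :: int and f :: "int \<Rightarrow> int"
  assumes "M \<ge> 0"
  shows "(\<Prod>t\<in>{-M..M}. f t) = f 0 * (\<Prod>t\<in>{1..M}. f t * f (-t))"
proof -
  have U: "{-M..M} = {-M..-1} \<union> ({0} \<union> {1..M})" using assms by auto
  have "(\<Prod>t\<in>{-M..-1}. f t) = (\<Prod>t\<in>{1..M}. f (-t))"
  proof -
    have "{-M..-1} = uminus ` {1..M}" by (auto simp: image_iff intro: bexI[where x="- _"])
    then have "prod f {-M..-1} = prod f (uminus ` {1..M})" by simp
    also have "\<dots> = prod (f \<circ> uminus) {1..M}" by (rule prod.reindex) (auto simp: inj_on_def)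
    finally show ?thesis by simp
  qed
  then show ?thesis unfolding U
    by (subst prod.union_disjoint; auto simp: prod.distrib)
qed

lemma mod8:
  fixes S :: "'a set" and y :: "'a \<Rightarrow> int"
  assumes "finite S" and "\<forall>t\<in>S. y t = 1 \<or> y t = -1"
  shows "8 dvd 2 * (\<Sum>t\<in>S. y t) - (2 * int (card S) - 2 + 2 * (\<Prod>t\<in>S. y t))
         \<and> ((\<Prod>t\<in>S. y t) = 1 \<or> (\<Prod>t\<in>S. y t) = -1)"
  using assms
proof (induction S rule: finite_induct)
  case empty
  then show ?case by simp
next
  case (insert x F)
  then have IH: "8 dvd 2 * (\<Sum>t\<in>F. y t) - (2 * int (card F) - 2 + 2 * (\<Prod>t\<in>F. y t))"
    and P: "(\<Prod>t\<in>F. y t) = 1 \<or> (\<Prod>t\<in>F. y t) = -1" and yx: "y x = 1 \<or> y x = -1" by auto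
  then obtain q where q: "2 * (\<Sum>t\<in>F. y t) - (2 * int (card F) - 2 + 2 * (\<Prod>t\<in>F. y t)) = 8 * q"
    by (auto simp: dvd_def)
  have eqn: "2 * (y x + sum y F) - (2 * int (card F + 1) - 2 + 2 * (y x * prod y F))
       = 8 * q + (2 * y x + 2 * prod y F - 2 - 2 * (y x * prod y F))"
    using q by (simp add: algebra_simps)
  have d8: "8 dvd 8 * q + (2 * y x + 2 * prod y F - 2 - 2 * (y x * prod y F))"
    using P yx by (elim disjE) simp_all
  have S: "sum y (insert x F) = y x + sum y F" and Pr: "prod y (insert x F) = y x * prod y F"
    and C: "card (insert x F) = card F + 1" using insert.hyps by auto
  have c1: "8 dvd 2 * sum y (insert x F) - (2 * int (card (insert x F)) - 2 + 2 * prod y (insert x F))"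
    unfolding S Pr C eqn by (rule d8)
  have c2: "prod y (insert x F) = 1 \<or> prod y (insert x F) = -1"
    unfolding Pr using P yx by (elim disjE) simp_all
  show ?case using c1 c2 by blast
qed



lemma shift_prod_sym:
  fixes M N h :: int and x :: "int \<Rightarrow> int"
  assumes M: "M \<ge> 0" and N: "N = 2*M+1" and per: "\<And>t. x t = x (t mod N)"
  shows "(\<Prod>t\<in>{-M..M}. x (t + h)) = (\<Prod>t\<in>{-M..M}. x t)"
proof -
  have S: "{-M..M} = {-M..<-M+N}" using N by auto
  have "(\<Prod>t\<in>{-M..<-M+N}. x (t + h)) = (\<Prod>t\<in>{0..<N}. x t)"
    by (rule prod_periodic) (use N M per in auto)
  moreover have "(\<Prod>t\<in>{-M..<-M+N}. x (t + 0)) = (\<Prod>t\<in>{0..<N}. x t)"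
    by (rule prod_periodic) (use N M per in auto)
  ultimately show ?thesis unfolding S by simp
qed

lemma core_sym:
  fixes M N h :: int and x :: "int \<Rightarrow> int"
  assumes M: "M \<ge> 0" and N: "N = 2*M+1" and per: "\<And>t. x t = x (t mod N)"
    and pm: "\<And>t. x t = 1 \<or> x t = -1" and sym: "\<And>t. x (-t) = x t"
  shows "8 dvd (\<Sum>t\<in>{-M..M}. x (t-h) * x (t+h)) - (N - 2 + 2 * x 0 * x h)"
proof -
  define y where "y t = x (t-h) * x (t+h)" for t
  have sq: "x t * x t = 1" for t using pm[of t] by auto
  have ym: "y (-t) = y t" for t
  proof -
    have e1: "-t-h = -(t+h)" and e2: "-t+h = -(t-h)" by simp_all
    have "x (-t-h) = x (t+h)" unfolding e1 by (rule sym)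
    moreover have "x (-t+h) = x (t-h)" unfolding e2 by (rule sym)
    ultimately show ?thesis by (simp add: y_def mult.commute)
  qed
  have y0: "y 0 = 1" using sym[of h] sq[of h] by (simp add: y_def)
  have ypm: "\<forall>t\<in>{1..M}. y t = 1 \<or> y t = -1"
  proof
    fix t show "y t = 1 \<or> y t = -1" using pm[of "t-h"] pm[of "t+h"] by (auto simp: y_def)
  qed
  have Ssplit: "(\<Sum>t\<in>{-M..M}. y t) = 1 + 2 * (\<Sum>t\<in>{1..M}. y t)"
    using split_sym_sum[OF M, of y] y0 ym by (simp add: sum_distrib_left)
  have m8: "8 dvd 2 * (\<Sum>t\<in>{1..M}. y t) - (2 * M - 2 + 2 * (\<Prod>t\<in>{1..M}. y t))"
    using mod8[of "{1..M}" y] ypm M by simp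
  have P1: "(\<Prod>t\<in>{1..M}. x (t-h)) = (\<Prod>t\<in>{1..M}. x (-t+h))"
  proof (rule prod.cong)
    fix t
    have e2: "-t+h = -(t-h)" by simp
    show "x (t-h) = x (-t+h)" unfolding e2 by (rule sym[symmetric])
  qed simp
  have A: "(\<Prod>t\<in>{-M..M}. x (t + h)) = x h * ((\<Prod>t\<in>{1..M}. x (t+h)) * (\<Prod>t\<in>{1..M}. x (-t+h)))"
    using split_sym_prod[OF M, of "\<lambda>t. x (t + h)"] by (simp add: prod.distrib)
  have B: "(\<Prod>t\<in>{-M..M}. x t) = x 0"
  proof -
    have "(\<Prod>t\<in>{-M..M}. x t) = x 0 * (\<Prod>t\<in>{1..M}. x t * x (-t))" by (rule split_sym_prod[OF M])
    also have "\<dots> = x 0 * (\<Prod>t\<in>{1..M}. 1)" by (simp only: sym sq)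
    finally show ?thesis by simp
  qed
  have Py: "(\<Prod>t\<in>{1..M}. y t) = (\<Prod>t\<in>{1..M}. x (-t+h)) * (\<Prod>t\<in>{1..M}. x (t+h))"
    unfolding y_def prod.distrib P1 ..
  have "x h * (\<Prod>t\<in>{1..M}. y t) = x 0"
    using A B shift_prod_sym[of M N x h, OF M N per] Py by (simp add: mult.commute)
  then have "(\<Prod>t\<in>{1..M}. y t) = x 0 * x h"
    by (metis mult.assoc mult.commute mult_1 sq)
  then have Pv: "(\<Prod>t\<in>{1..M}. y t) = x 0 * x h" .
  from m8 obtain q where q: "2 * (\<Sum>t\<in>{1..M}. y t) - (2 * M - 2 + 2 * (\<Prod>t\<in>{1..M}. y t)) = 8 * q"
    by (auto simp: dvd_def)
  have E: "(\<Sum>t\<in>{-M..M}. y t) - (N - 2 + 2 * x 0 * x h) = 8 * q"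
    using Ssplit q Pv N by (simp add: algebra_simps)
  then show ?thesis unfolding y_def by simp
qed

lemma nz_mod:
  fixes t N :: int
  assumes "t \<noteq> 0" "\<bar>t\<bar> < N"
  shows "t mod N \<noteq> 0"
proof
  assume "t mod N = 0"
  then have "N dvd t" by auto
  then have "\<bar>N\<bar> \<le> \<bar>t\<bar>" using assms(1) by (rule dvd_imp_le_int[rotated])
  then show False using assms by simp
qed

lemma core_skew:
  fixes M N h :: int and x :: "int \<Rightarrow> int"
  assumes M: "M \<ge> 1" and N: "N = 2*M+1" and per: "\<And>t. x t = x (t mod N)"
    and pm: "\<And>t. x t = 1 \<or> x t = -1" and x0: "x 0 = 1"
    and skew: "\<And>t. t mod N \<noteq> 0 \<Longrightarrow> x (-t) = - x t"
    and h: "1 \<le> h" "h \<le> M"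
  shows "8 dvd (\<Sum>t\<in>{-M..M}. x (t-h) * x (t+h)) - (N - 6 - 2 * x h * x (2*h))"
proof -
  have M0: "M \<ge> 0" using M by simp
  define y where "y t = x (t-h) * x (t+h)" for t
  have sq: "x t * x t = 1" for t using pm[of t] by auto
  have hnz: "h mod N \<noteq> 0" using h N by (intro nz_mod) auto
  have h2nz: "(2*h) mod N \<noteq> 0" using h N by (intro nz_mod) auto
  have ee: "0 - h = -h" "0 + h = h" "h - h = 0" "h + h = 2*h" "-h - h = -(2*h)" "-h + h = 0" by simp_all
  have y0: "y 0 = -1" unfolding y_def ee skew[OF hnz] using sq[of h] by simp
  have ysum: "y t + y (-t) = (if t = h then 0 else 2 * y t)" if t: "t \<in> {1..M}" for t
  proof (cases "t = h")
    case True
    have "y h = x (2*h)" unfolding y_def ee x0 by simp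
    moreover have "y (-h) = - x (2*h)" unfolding y_def ee x0 skew[OF h2nz] by simp
    ultimately show ?thesis using True by simp
  next
    case False
    have a: "(t+h) mod N \<noteq> 0" using t h N by (intro nz_mod) auto
    have b: "(t-h) mod N \<noteq> 0" using t h N False by (intro nz_mod) auto
    have e1: "-t-h = -(t+h)" and e2: "-t+h = -(t-h)" by simp_all
    have "x (-t-h) = - x (t+h)" unfolding e1 by (rule skew[OF a])
    moreover have "x (-t+h) = - x (t-h)" unfolding e2 by (rule skew[OF b])
    ultimately show ?thesis using False by (simp add: y_def mult.commute)
  qed
  have yh: "y h = x (2*h)" unfolding y_def ee x0 by simp
  have hin: "h \<in> {1..M}" using h by simp
  have "(\<Sum>t\<in>{1..M}. y t + y (-t)) = (\<Sum>t\<in>{1..M}. 2 * y t - (if t = h then 2 * y t else 0))"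
    by (rule sum.cong) (auto simp: ysum)
  also have "\<dots> = 2 * (\<Sum>t\<in>{1..M}. y t) - 2 * x (2*h)"
    using hin yh by (simp add: sum_subtractf sum_distrib_left sum.delta)
  finally have Ssplit: "(\<Sum>t\<in>{-M..M}. y t) = -1 + 2 * (\<Sum>t\<in>{1..M}. y t) - 2 * x (2*h)"
    using split_sym_sum[OF M0, of y] y0 by simp
  have ypm: "\<forall>t\<in>{1..M}. y t = 1 \<or> y t = -1"
  proof
    fix t show "y t = 1 \<or> y t = -1" using pm[of "t-h"] pm[of "t+h"] by (auto simp: y_def)
  qed
  have m8: "8 dvd 2 * (\<Sum>t\<in>{1..M}. y t) - (2 * M - 2 + 2 * (\<Prod>t\<in>{1..M}. y t))"
    using mod8[of "{1..M}" y] ypm M by simp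
  have P1: "(\<Prod>t\<in>{1..M}. x (t-h)) = (\<Prod>t\<in>{1..M}. (if t = h then 1 else -1) * x (-t+h))"
  proof (rule prod.cong)
    fix t assume t: "t \<in> {1..M}"
    show "x (t-h) = (if t = h then 1 else -1) * x (-t+h)"
    proof (cases "t = h")
      case False
      have b: "(t-h) mod N \<noteq> 0" using t h N False by (intro nz_mod) auto
      have e2: "-t+h = -(t-h)" by simp
      show ?thesis using False skew[OF b] unfolding e2 by simp
    qed simp
  qed simp
  have Psign: "(\<Prod>t\<in>{1..M}. (if t = h then 1 else -1::int)) = (-1) ^ (nat M - 1)"
  proof -
    have "(\<Prod>t\<in>{1..M}. (if t = h then 1 else -1::int)) =
          (if h = h then 1 else -1) * (\<Prod>t\<in>{1..M} - {h}. (if t = h then 1 else -1::int))"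
      using hin by (rule prod.remove[OF finite_atLeastAtMost_int])
    also have "\<dots> = (\<Prod>t\<in>{1..M} - {h}. (-1::int))" by (auto intro!: prod.cong)
    also have "\<dots> = (-1) ^ card ({1..M} - {h})" by simp
    also have "card ({1..M} - {h}) = nat M - 1" using hin by simp
    finally show ?thesis .
  qed
  have A: "(\<Prod>t\<in>{-M..M}. x (t + h)) = x h * ((\<Prod>t\<in>{1..M}. x (t+h)) * (\<Prod>t\<in>{1..M}. x (-t+h)))"
    using split_sym_prod[OF M0, of "\<lambda>t. x (t + h)"] by (simp add: prod.distrib)
  have xneg: "x t * x (-t) = -1" if "t \<in> {1..M}" for t
  proof -
    have "t mod N \<noteq> 0" using that N by (intro nz_mod) auto
    then show ?thesis using skew sq[of t] by simp
  qed
  have B: "(\<Prod>t\<in>{-M..M}. x t) = (-1) ^ nat M"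
  proof -
    have "(\<Prod>t\<in>{-M..M}. x t) = x 0 * (\<Prod>t\<in>{1..M}. x t * x (-t))" by (rule split_sym_prod[OF M0])
    also have "\<dots> = (\<Prod>t\<in>{1..M}. x t * x (-t))" using x0 by simp
    also have "\<dots> = (\<Prod>t\<in>{1..M}. (-1::int))" by (rule prod.cong[OF refl]) (rule xneg)
    also have "\<dots> = (-1) ^ nat M" by simp
    finally show ?thesis .
  qed
  have Py: "(\<Prod>t\<in>{1..M}. y t) = (-1) ^ (nat M - 1) * ((\<Prod>t\<in>{1..M}. x (-t+h)) * (\<Prod>t\<in>{1..M}. x (t+h)))"
    unfolding y_def prod.distrib P1 Psign by simp
  have k: "nat M = Suc (nat M - 1)" using M by simp
  define P1 where "P1 = (\<Prod>t\<in>{1..M}. x (-t+h))"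
  define P2 where "P2 = (\<Prod>t\<in>{1..M}. x (t+h))"
  have AB: "x h * (P2 * P1) = (-1) ^ nat M"
    using A B shift_prod_sym[of M N x h, OF M0 N per] unfolding P1_def P2_def by simp
  have "x h * (\<Prod>t\<in>{1..M}. y t) = (-1) ^ (nat M - 1) * (x h * (P2 * P1))"
    unfolding Py P1_def[symmetric] P2_def[symmetric] by (simp only: mult_ac)
  also have "\<dots> = (-1) ^ (nat M - 1) * (-1) ^ nat M" unfolding AB ..
  also have "\<dots> = -1" by (subst k) simp
  finally have xP: "x h * (\<Prod>t\<in>{1..M}. y t) = -1" .
  have "(\<Prod>t\<in>{1..M}. y t) = x h * (x h * (\<Prod>t\<in>{1..M}. y t))"
    using sq[of h] by (simp add: mult.assoc[symmetric])
  then have Pv: "(\<Prod>t\<in>{1..M}. y t) = - x h" unfolding xP by simp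
  from m8 obtain q where q: "2 * (\<Sum>t\<in>{1..M}. y t) - (2 * M - 2 + 2 * (\<Prod>t\<in>{1..M}. y t)) = 8 * q"
    by (auto simp: dvd_def)
  have E: "(\<Sum>t\<in>{-M..M}. y t) - (N - 6 - 2 * x h * x (2*h)) = 8 * q + 2 * (1 - x h) * (1 - x (2*h))"
    using Ssplit q Pv N by (simp add: algebra_simps)
  have "8 dvd 2 * (1 - x h) * (1 - x (2*h))" using pm[of h] pm[of "2*h"] by (elim disjE) simp_all
  then have "8 dvd (\<Sum>t\<in>{-M..M}. y t) - (N - 6 - 2 * x h * x (2*h))" unfolding E by simp
  then show ?thesis unfolding y_def .
qed



definition seqf :: "nat \<Rightarrow> (nat \<Rightarrow> nat \<Rightarrow> int) \<Rightarrow> int \<Rightarrow> int" where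
  "seqf n X t = X 0 (nat (t mod int n))"

lemma seqf_per: "seqf n X t = seqf n X (t mod int n)"
  by (simp add: seqf_def)

lemma seqf_cong: "t mod int n = s mod int n \<Longrightarrow> seqf n X t = seqf n X s"
  by (simp add: seqf_def)

lemma seqf_nat: "j < n \<Longrightarrow> seqf n X (int j) = X 0 j"
  by (simp add: seqf_def)

lemma seqf_pm: "n > 0 \<Longrightarrow> pm1_mat n X \<Longrightarrow> seqf n X t = 1 \<or> seqf n X t = -1"
proof -
  assume n: "n > 0" and pm: "pm1_mat n X"
  have "t mod int n < int n" "0 \<le> t mod int n" using n by simp_all
  then have "nat (t mod int n) < n" by linarith
  then show ?thesis using pm unfolding seqf_def pm1_mat_def by blast
qed

lemma seqf_circ:
  assumes "n > 0" "circulant_mat n X"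
  shows "i < n \<Longrightarrow> j < n \<Longrightarrow> X i j = seqf n X (int j - int i)"
proof (induction i arbitrary: j)
  case 0
  then show ?case by (simp add: seqf_nat)
next
  case (Suc i)
  have "X (Suc i) j = X ((Suc i + n - 1) mod n) ((j + n - 1) mod n)"
    using assms(2) Suc.prems unfolding circulant_mat_def by blast
  also have "(Suc i + n - 1) mod n = i" using Suc.prems by simp
  also have "X i ((j + n - 1) mod n) = seqf n X (int ((j + n - 1) mod n) - int i)"
    using Suc assms by simp
  also have "\<dots> = seqf n X (int j - int (Suc i))"
  proof (rule seqf_cong)
    have eq: "int ((j + n - 1) mod n) = (int j + int n - 1) mod int n"
      using assms(1) by (simp add: zmod_int of_nat_diff)
    have "(int ((j + n - 1) mod n) - int i) mod int n = ((int j + int n - 1) - int i) mod int n"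
      unfolding eq by (rule mod_diff_left_eq)
    also have "\<dots> = ((int j - int (Suc i)) + int n) mod int n"
      by (rule arg_cong[where f="\<lambda>z. z mod int n"]) simp
    also have "\<dots> = (int j - int (Suc i)) mod int n" by (rule mod_add_self2)
    finally show "(int ((j + n - 1) mod n) - int i) mod int n = (int j - int (Suc i)) mod int n" .
  qed
  finally show ?case .
qed

lemma seqf_sym:
  assumes n: "n > 0" and c: "circulant_mat n X" and s: "symmetric_mat n X"
  shows "seqf n X (-t) = seqf n X t"
proof -
  define j where "j = nat (t mod int n)"
  have b: "t mod int n < int n" "0 \<le> t mod int n" using n by simp_all
  have jn: "j < n" unfolding j_def using b by linarith
  have jt: "int j = t mod int n" unfolding j_def using b by simp
  have "seqf n X t = X 0 j" unfolding seqf_def j_def ..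
  also have "\<dots> = X j 0" using s jn n unfolding symmetric_mat_def by blast
  also have "\<dots> = seqf n X (int 0 - int j)" using seqf_circ[OF n c] jn n by blast
  also have "\<dots> = seqf n X (-t)"
  proof (rule seqf_cong)
    show "(int 0 - int j) mod int n = (-t) mod int n" unfolding jt by (simp add: mod_minus_eq)
  qed
  finally show ?thesis by simp
qed

lemma seqf_skew:
  assumes n: "n > 0" and c: "circulant_mat n X" and s: "skew_mat n X" and t: "t mod int n \<noteq> 0"
  shows "seqf n X (-t) = - seqf n X t"
proof -
  define j where "j = nat (t mod int n)"
  have b: "t mod int n < int n" "0 \<le> t mod int n" using n by simp_all
  have jn: "j < n" unfolding j_def using b by linarith
  have jt: "int j = t mod int n" unfolding j_def using b by simp
  have j0: "j \<noteq> 0" using jt t by auto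
  have "seqf n X t = X 0 j" unfolding seqf_def j_def ..
  also have "\<dots> = - X j 0" using s jn n j0 unfolding skew_mat_def by metis
  also have "X j 0 = seqf n X (int 0 - int j)" using seqf_circ[OF n c] jn n by blast
  also have "\<dots> = seqf n X (-t)"
  proof (rule seqf_cong)
    show "(int 0 - int j) mod int n = (-t) mod int n" unfolding jt by (simp add: mod_minus_eq)
  qed
  finally show ?thesis by simp
qed

lemma seqf_zero:
  assumes n: "n > 0" and s: "skew_mat n X"
  shows "seqf n X 0 = 1"
  using s n unfolding skew_mat_def seqf_def by simp

lemma sum_conv:
  fixes M :: int and g :: "int \<Rightarrow> int"
  assumes M: "M \<ge> 0" and n: "int n = 2*M+1" and per: "\<And>t. g t = g (t mod int n)"
  shows "(\<Sum>l<n. g (int l)) = (\<Sum>t\<in>{-M..M}. g t)"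
proof -
  have "(\<Sum>l<n. g (int l)) = (\<Sum>t\<in>int ` {..<n}. g t)"
    by (simp add: sum.reindex)
  also have "int ` {..<n} = {0..<int n}"
    using image_atLeastZeroLessThan_int[of "int n"] by simp
  also have "(\<Sum>t\<in>{0..<int n}. g t) = (\<Sum>t\<in>{-M..<-M+int n}. g (t + 0))"
    by (rule sum_periodic[symmetric]) (use n M per in auto)
  also have "{-M..<-M+int n} = {-M..M}" using n by auto
  finally show ?thesis by simp
qed

lemma per_prod:
  assumes "n > 0"
  shows "(\<lambda>t. seqf n X (t - h) * seqf n X (t + h)) t
       = (\<lambda>t. seqf n X (t - h) * seqf n X (t + h)) (t mod int n)"
proof -
  have "seqf n X (t - h) = seqf n X (t mod int n - h)"
    by (rule seqf_cong) (simp add: mod_diff_left_eq)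
  moreover have "seqf n X (t + h) = seqf n X (t mod int n + h)"
    by (rule seqf_cong) (simp add: mod_add_left_eq)
  ultimately show ?thesis by simp
qed

lemma rowA:
  fixes M h :: int
  assumes n: "n > 0" and c: "circulant_mat n X" and h: "1 \<le> h" "h < int n"
    and M: "M \<ge> 0" and nM: "int n = 2*M+1"
  shows "(\<Sum>l<n. X (nat h) l * X (n - nat h) l) = (\<Sum>t\<in>{-M..M}. seqf n X (t-h) * seqf n X (t+h))"
proof -
  have "(\<Sum>l<n. X (nat h) l * X (n - nat h) l) = (\<Sum>l<n. (\<lambda>t. seqf n X (t - h) * seqf n X (t + h)) (int l))"
  proof (rule sum.cong[OF refl])
    fix l assume l: "l \<in> {..<n}"
    have p: "nat h < n" "n - nat h < n" using h by auto
    have ih: "int (nat h) = h" "int (n - nat h) = int n - h" using h by auto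
    have "X (nat h) l = seqf n X (int l - h)" using seqf_circ[OF n c p(1)] l ih by simp
    moreover have "X (n - nat h) l = seqf n X (int l - (int n - h))" using seqf_circ[OF n c p(2)] l ih by simp
    moreover have "seqf n X (int l - (int n - h)) = seqf n X (int l + h)"
      by (rule seqf_cong) (simp add: mod_eq_dvd_iff)
    ultimately show "X (nat h) l * X (n - nat h) l = (\<lambda>t. seqf n X (t - h) * seqf n X (t + h)) (int l)"
      by simp
  qed
  also have "\<dots> = (\<Sum>t\<in>{-M..M}. (\<lambda>t. seqf n X (t - h) * seqf n X (t + h)) t)"
    by (rule sum_conv[OF M nM, where g="\<lambda>t. seqf n X (t - h) * seqf n X (t + h)"]) (rule per_prod[OF n])
  finally show ?thesis by simp
qed

lemma rowB:
  fixes M h :: int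
  assumes n: "n > 0" and c: "circulant_mat n X" and s: "symmetric_mat n X" and h: "1 \<le> h" "h < int n"
    and M: "M \<ge> 0" and nM: "int n = 2*M+1"
  shows "(\<Sum>l<n. X (nat h) l * X l (n - nat h)) = (\<Sum>t\<in>{-M..M}. seqf n X (t-h) * seqf n X (t+h))"
proof -
  have "(\<Sum>l<n. X (nat h) l * X l (n - nat h)) = (\<Sum>l<n. (\<lambda>t. seqf n X (t - h) * seqf n X (t + h)) (int l))"
  proof (rule sum.cong[OF refl])
    fix l assume l: "l \<in> {..<n}"
    have p: "nat h < n" "n - nat h < n" using h by auto
    have ih: "int (nat h) = h" "int (n - nat h) = int n - h" using h by auto
    have "X (nat h) l = seqf n X (int l - h)" using seqf_circ[OF n c p(1)] l ih by simp
    moreover have "X l (n - nat h) = seqf n X ((int n - h) - int l)" using seqf_circ[OF n c _ p(2)] l ih by simp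
    moreover have "seqf n X ((int n - h) - int l) = seqf n X (- (int l + h))"
      by (rule seqf_cong) (simp add: mod_eq_dvd_iff)
    moreover have "seqf n X (- (int l + h)) = seqf n X (int l + h)" by (rule seqf_sym[OF n c s])
    ultimately show "X (nat h) l * X l (n - nat h) = (\<lambda>t. seqf n X (t - h) * seqf n X (t + h)) (int l)"
      by simp
  qed
  also have "\<dots> = (\<Sum>t\<in>{-M..M}. (\<lambda>t. seqf n X (t - h) * seqf n X (t + h)) t)"
    by (rule sum_conv[OF M nM, where g="\<lambda>t. seqf n X (t - h) * seqf n X (t + h)"]) (rule per_prod[OF n])
  finally show ?thesis by simp
qed

lemma fin4:
  fixes u v w r z :: int
  assumes "u = 1 \<or> u = -1" "v = 1 \<or> v = -1" "w = 1 \<or> w = -1" "r = 1 \<or> r = -1"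
    and "8 dvd 2 * (u + v + w + r) + 8 * z"
  shows "u * v * w * r = 1"
proof -
  have "8 dvd 2 * (u + v + w + r)" using assms(5) by (metis dvd_add_left_iff dvd_triv_left)
  then show ?thesis using assms(1-4) by (elim disjE) simp_all
qed

lemma fin_sign:
  fixes ah a2h b0 bh c0 ch d0 dh :: int
  assumes "a2h = 1 \<or> a2h = -1" "b0 = 1 \<or> b0 = -1" "c0 = 1 \<or> c0 = -1" "d0 = 1 \<or> d0 = -1"
    and "(- ah * a2h) * (b0 * bh) * (c0 * ch) * (d0 * dh) = 1"
  shows "ah * bh * ch * dh = - a2h * b0 * c0 * d0"
  using assms by (elim disjE) (simp_all add: algebra_simps)

theorem theorem4:
  fixes n :: nat and A B C D :: "nat \<Rightarrow> nat \<Rightarrow> int"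
  assumes "odd n" and "n > 0"
    and "good_matrices n A B C D"
  shows "\<forall>k. 1 \<le> k \<and> k < n \<longrightarrow>
           A 0 k * B 0 k * C 0 k * D 0 k = - A 0 ((2 * k) mod n) * B 0 0 * C 0 0 * D 0 0"
proof (intro allI impI)
  fix k assume k: "1 \<le> k \<and> k < n"
  have n: "n > 0" by (rule assms(2))
  obtain m where nm: "n = 2*m+1" using assms(1) by (rule oddE)
  define M where "M = int m"
  have nM: "int n = 2*M+1" unfolding M_def nm by simp
  have M1: "M \<ge> 1" using k nm unfolding M_def by simp
  have M0: "M \<ge> 0" using M1 by simp
  note G = assms(3)[unfolded good_matrices_def]
  have pmA: "pm1_mat n A" and pmB: "pm1_mat n B" and pmC: "pm1_mat n C" and pmD: "pm1_mat n D"
    and cA: "circulant_mat n A" and cB: "circulant_mat n B" and cC: "circulant_mat n C" and cD: "circulant_mat n D"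
    and sA: "skew_mat n A" and sB: "symmetric_mat n B" and sC: "symmetric_mat n C" and sD: "symmetric_mat n D"
    and E: "\<forall>i<n. \<forall>j<n.
        (\<Sum>k<n. A i k * A j k) + (\<Sum>k<n. B i k * B k j) + (\<Sum>k<n. C i k * C k j)
        + (\<Sum>k<n. D i k * D k j) = (if i = j then 4 * int n else 0)" using G by blast+
  define a where "a = seqf n A"
  define b where "b = seqf n B"
  define c where "c = seqf n C"
  define d where "d = seqf n D"
  define h :: int where "h = (if k \<le> m then int k else int n - int k)"
  have h1: "1 \<le> h" and hM: "h \<le> M" and hn: "h < int n"
    using k nm unfolding h_def M_def by auto
  have pq: "nat h \<noteq> n - nat h" and pn: "nat h < n" and qn: "n - nat h < n"
    using h1 hM hn nM by auto
  have E0: "(\<Sum>l<n. A (nat h) l * A (n - nat h) l) + (\<Sum>l<n. B (nat h) l * B l (n - nat h))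
      + (\<Sum>l<n. C (nat h) l * C l (n - nat h)) + (\<Sum>l<n. D (nat h) l * D l (n - nat h)) = 0"
    using E pn qn pq by simp
  define SA where "SA = (\<Sum>t\<in>{-M..M}. a (t-h) * a (t+h))"
  define SB where "SB = (\<Sum>t\<in>{-M..M}. b (t-h) * b (t+h))"
  define SC where "SC = (\<Sum>t\<in>{-M..M}. c (t-h) * c (t+h))"
  define SD where "SD = (\<Sum>t\<in>{-M..M}. d (t-h) * d (t+h))"
  have S0: "SA + SB + SC + SD = 0"
    using E0 unfolding SA_def SB_def SC_def SD_def a_def b_def c_def d_def
      rowA[OF n cA h1 hn M0 nM] rowB[OF n cB sB h1 hn M0 nM]
      rowB[OF n cC sC h1 hn M0 nM] rowB[OF n cD sD h1 hn M0 nM] .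
  have 8: "8 dvd SA - (int n - 6 - 2 * a h * a (2*h))"
    unfolding SA_def a_def
    by (rule core_skew[OF M1 nM seqf_per seqf_pm[OF n pmA] seqf_zero[OF n sA] seqf_skew[OF n cA sA] h1 hM])
  have 9: "8 dvd SB - (int n - 2 + 2 * b 0 * b h)"
    unfolding SB_def b_def
    by (rule core_sym[OF M0 nM seqf_per seqf_pm[OF n pmB] seqf_sym[OF n cB sB]])
  have 10: "8 dvd SC - (int n - 2 + 2 * c 0 * c h)"
    unfolding SC_def c_def
    by (rule core_sym[OF M0 nM seqf_per seqf_pm[OF n pmC] seqf_sym[OF n cC sC]])
  have 11: "8 dvd SD - (int n - 2 + 2 * d 0 * d h)"
    unfolding SD_def d_def
    by (rule core_sym[OF M0 nM seqf_per seqf_pm[OF n pmD] seqf_sym[OF n cD sD]])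
  from 8 obtain qa where qa: "SA - (int n - 6 - 2 * a h * a (2*h)) = 8 * qa" by (auto simp: dvd_def)
  from 9 obtain qb where qb: "SB - (int n - 2 + 2 * b 0 * b h) = 8 * qb" by (auto simp: dvd_def)
  from 10 obtain qc where qc: "SC - (int n - 2 + 2 * c 0 * c h) = 8 * qc" by (auto simp: dvd_def)
  from 11 obtain qd where qd: "SD - (int n - 2 + 2 * d 0 * d h) = 8 * qd" by (auto simp: dvd_def)
  have pa: "\<And>t. a t = 1 \<or> a t = -1" unfolding a_def by (rule seqf_pm[OF n pmA])
  have pb: "\<And>t. b t = 1 \<or> b t = -1" unfolding b_def by (rule seqf_pm[OF n pmB])
  have pc: "\<And>t. c t = 1 \<or> c t = -1" unfolding c_def by (rule seqf_pm[OF n pmC])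
  have pd: "\<And>t. d t = 1 \<or> d t = -1" unfolding d_def by (rule seqf_pm[OF n pmD])
  have sum0: "2 * ((- a h * a (2*h)) + b 0 * b h + c 0 * c h + d 0 * d h) + 8 * (M - 1 + qa + qb + qc + qd) = 0"
    using S0 qa qb qc qd nM by (simp add: algebra_simps)
  have u: "- a h * a (2*h) = 1 \<or> - a h * a (2*h) = -1" using pa[of h] pa[of "2*h"] by auto
  have v: "b 0 * b h = 1 \<or> b 0 * b h = -1" using pb[of 0] pb[of h] by auto
  have w: "c 0 * c h = 1 \<or> c 0 * c h = -1" using pc[of 0] pc[of h] by auto
  have r: "d 0 * d h = 1 \<or> d 0 * d h = -1" using pd[of 0] pd[of h] by auto
  have "(- a h * a (2*h)) * (b 0 * b h) * (c 0 * c h) * (d 0 * d h) = 1"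
    by (rule fin4[OF u v w r, where z="M - 1 + qa + qb + qc + qd"]) (simp only: sum0 dvd_0_right)
  then have key: "a h * b h * c h * d h = - a (2*h) * b 0 * c 0 * d 0"
    by (rule fin_sign[OF pa pb pc pd])
  have b0: "B 0 0 = b 0" "C 0 0 = c 0" "D 0 0 = d 0"
    using seqf_nat[OF n, of B] seqf_nat[OF n, of C] seqf_nat[OF n, of D] unfolding b_def c_def d_def by simp_all
  have k2: "A 0 ((2 * k) mod n) = a (2 * int k)"
  proof -
    have "A 0 ((2 * k) mod n) = a (int ((2 * k) mod n))" unfolding a_def using n by (simp add: seqf_nat)
    also have "\<dots> = a (2 * int k)" unfolding a_def by (rule seqf_cong) (simp add: zmod_int)
    finally show ?thesis .
  qed
  have kk: "A 0 k = a (int k)" "B 0 k = b (int k)" "C 0 k = c (int k)" "D 0 k = d (int k)"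
    unfolding a_def b_def c_def d_def using k by (simp_all add: seqf_nat)
  show "A 0 k * B 0 k * C 0 k * D 0 k = - A 0 ((2 * k) mod n) * B 0 0 * C 0 0 * D 0 0"
  proof (cases "k \<le> m")
    case True
    then have hk: "h = int k" unfolding h_def by simp
    have "a (int k) * b (int k) * c (int k) * d (int k) = - a (2 * int k) * b 0 * c 0 * d 0"
      using key unfolding hk .
    then show ?thesis unfolding kk k2 b0 .
  next
    case False
    then have hk: "h = int n - int k" unfolding h_def by simp
    have hz: "h mod int n \<noteq> 0" using h1 hn by (intro nz_mod) auto
    have h2z: "(2*h) mod int n \<noteq> 0" using h1 hM nM by (intro nz_mod) auto
    have m1: "int k mod int n = (- h) mod int n" unfolding hk by (simp add: mod_eq_dvd_iff)
    have m2: "(2 * int k) mod int n = (- (2*h)) mod int n" unfolding hk by (simp add: mod_eq_dvd_iff algebra_simps)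
    have "a (int k) = - a h" unfolding a_def using seqf_cong[OF m1] seqf_skew[OF n cA sA hz] by simp
    moreover have "a (2 * int k) = - a (2*h)" unfolding a_def using seqf_cong[OF m2] seqf_skew[OF n cA sA h2z] by simp
    moreover have "b (int k) = b h" unfolding b_def using seqf_cong[OF m1] seqf_sym[OF n cB sB] by simp
    moreover have "c (int k) = c h" unfolding c_def using seqf_cong[OF m1] seqf_sym[OF n cC sC] by simp
    moreover have "d (int k) = d h" unfolding d_def using seqf_cong[OF m1] seqf_sym[OF n cD sD] by simp
    ultimately have "a (int k) * b (int k) * c (int k) * d (int k) = - (a h * b h * c h * d h)"
      and "- a (2 * int k) * b 0 * c 0 * d 0 = - (- a (2*h) * b 0 * c 0 * d 0)" by simp_all
    then have "a (int k) * b (int k) * c (int k) * d (int k) = - a (2 * int k) * b 0 * c 0 * d 0"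
      using key by simp
    then show ?thesis unfolding kk k2 b0 .
  qed
qed

end
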